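(* Let $\Omega_n=\dfrac{\pi^{n/2}}{\Gamma\left(\frac n2+1\right)}$ for $n\in\mathbb{N}_0$. As $n\to\infty$, the following asymptotic series holds: \[ \frac{\Omega_n^2}{\Omega_{n-1}\Omega_{n+1}}=\sum_{j=0}^\infty\frac{d_j}{n^j}, \] where $d_0=1$ and, for $j\in\mathbb{N}$, \[ d_j=\frac1j\sum_{k=1}^j(-1)^k\left[2B_{k+1}(1)-B_{k+1}\left(\tfrac12\right)-B_{k+1}\left(\tfrac32\right)\right]\frac{2^k}{k+1}d_{j-k}, \] $B_m(x)$ denoting the Bernoulli polynomials.
   Context: $\Omega_n$ is the volume of the unit ball in $\mathbb{R}^n$; $\Gamma$ is Euler's gamma function. The Bernoulli polynomials are defined by $\frac{te^{xt}}{e^t-1}=\sum_{m\ge0}B_m(x)\frac{t^m}{m!}$. The series equality is an asymptotic expansion: for every $N$, the left side minus $\sum_{j=0}^Nd_jn^{-j}$ is $O(n^{-N-1})$ as $n\to\infty$. *)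

theory Defs
  imports "HOL-Analysis.Analysis" "HOL-Computational_Algebra.Formal_Power_Series"
    "HOL-Library.Landau_Symbols"
begin

definition bernpoly :: "nat \<Rightarrow> real \<Rightarrow> real" where
  "bernpoly m x = fact m * fps_nth (fps_X * fps_exp x / (fps_exp 1 - 1)) m"

definition cB :: "nat \<Rightarrow> real" where
  "cB k = 2 * bernpoly (k + 1) 1 - bernpoly (k + 1) (1/2) - bernpoly (k + 1) (3/2)"

function dcoef :: "nat \<Rightarrow> real" where
  "dcoef 0 = 1"
| "dcoef (Suc j) = 1 / real (Suc j) *
     (\<Sum>k\<in>{1..Suc j}. (-1) ^ k * cB k * 2 ^ k / real (k + 1) * dcoef (Suc j - k))"
  by pat_completeness auto
termination by (relation "Wellfounded.measure id") auto

end

theory Submission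
  imports Defs "HOL-Computational_Algebra.Polynomial_FPS"
begin


abbreviation E :: "real \<Rightarrow> real fps" where "E c \<equiv> fps_exp c"

definition Bx :: "real \<Rightarrow> real fps" where
  "Bx a = fps_X * fps_exp a / (fps_exp 1 - 1)"

lemma Bx_mult: "Bx a * (E 1 - 1) = fps_X * E a"
proof -
  have ne: "E 1 - 1 \<noteq> 0"
  proof
    assume "E 1 - 1 = 0"
    hence "fps_nth (E 1 - 1) 1 = 0" by simp
    thus False by simp
  qed
  have s1: "subdegree (E 1 - 1) \<le> 1"
    by (rule subdegree_leI) simp
  have s2: "subdegree (fps_X * E a) = 1"
    by (rule subdegreeI) (auto simp: fps_X_mult_nth)
  show ?thesis unfolding Bx_def
    using fps_times_divide_eq[OF ne, of "fps_X * E a"] s1 s2 by simp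
qed

definition Yf :: "real fps" where
  "Yf = fps_const 2 * Bx 1 - Bx (1/2) - Bx (3/2)"

lemma cB_Yf: "cB k = fact (k+1) * fps_nth Yf (k+1)"
  unfolding cB_def bernpoly_def Yf_def Bx_def by (simp add: algebra_simps)

lemma Yf_eq: "Yf * (1 + E (1/2)) = fps_X * (E (1/2) - E 1)"
proof -
  define e where "e = E (1/2)"
  have e1: "E 1 = e * e" unfolding e_def by (simp flip: fps_exp_add_mult)
  have e32: "E (3/2) = e * e * e" unfolding e_def by (simp flip: fps_exp_add_mult)
  have ne: "E 1 - 1 \<noteq> 0"
  proof
    assume "E 1 - 1 = 0"
    hence "fps_nth (E 1 - 1) 1 = 0" by simp
    thus False by simp
  qed
  have "Yf * (E 1 - 1) = fps_const 2 * (Bx 1 * (E 1 - 1)) - Bx (1/2) * (E 1 - 1) - Bx (3/2) * (E 1 - 1)"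
    unfolding Yf_def by (simp add: algebra_simps)
  also have "\<dots> = fps_X * (fps_const 2 * E 1 - E (1/2) - E (3/2))"
    by (simp only: Bx_mult) (simp add: algebra_simps)
  finally have "Yf * (E 1 - 1) = fps_X * (fps_const 2 * E 1 - E (1/2) - E (3/2))" .
  note h = this
  have two: "fps_const (2::real) = 1 + 1"
    by (metis fps_const_add fps_const_1_eq_1 one_add_one)
  have "(Yf * (1 + e)) * (E 1 - 1) = (Yf * (E 1 - 1)) * (1 + e)" by (simp add: algebra_simps)
  also have "\<dots> = fps_X * ((1+1) * (e*e) - e - e*e*e) * (1+e)"
    using h unfolding e1 e32 two e_def by simp
  also have "\<dots> = (fps_X * (e - e*e)) * (e*e - 1)" by algebra
  finally have "(Yf * (1 + E (1/2))) * (E 1 - 1) = (fps_X * (E (1/2) - E 1)) * (E 1 - 1)"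
    unfolding e1 e_def .
  thus ?thesis using ne by simp
qed



lemma Yf_coeff:
  "fps_nth (Yf * (1 + E (1/2))) n = fps_nth Yf n + (\<Sum>i=0..n. fps_nth Yf i * (1/2)^(n-i) / fact (n-i))"
  by (simp add: algebra_simps fps_mult_nth fps_exp_def)

lemma Y0: "fps_nth Yf 0 = 0"
  using arg_cong[OF Yf_eq, of "\<lambda>f. fps_nth f 0"] unfolding Yf_coeff by simp

lemma Y1: "fps_nth Yf 1 = 0"
  using arg_cong[OF Yf_eq, of "\<lambda>f. fps_nth f 1"] unfolding Yf_coeff by (simp add: Y0 fps_X_mult_nth)

lemma Y_rec: "fps_nth Yf (m+1) + (\<Sum>k\<le>m. fps_nth Yf (k+1) * (1/2)^(m-k)/fact(m-k)) = ((1/2)^m - 1)/fact m"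
proof -
  have "fps_nth (Yf * (1 + E (1/2))) (Suc m) = fps_nth (fps_X * (E (1/2) - E 1)) (Suc m)"
    using Yf_eq by simp
  also have "\<dots> = ((1/2)^m - 1)/fact m" by (simp add: fps_X_mult_nth diff_divide_distrib)
  finally have "fps_nth Yf (Suc m) + (\<Sum>i=0..Suc m. fps_nth Yf i * (1/2)^(Suc m-i) / fact (Suc m-i)) = ((1/2)^m - 1)/fact m"
    unfolding Yf_coeff .
  thus ?thesis unfolding sum.atLeast0_atMost_Suc_shift by (simp add: Y0 atMost_atLeast0)
qed

definition ucoef :: "nat \<Rightarrow> real" where
  "ucoef k = (-1)^k * cB k * 2^k / real (k+1)"

lemma m2pow: "(- 2::real) ^ k = (- 1) ^ k * 2 ^ k" by (induct k) auto

lemma ucoef_Y: "ucoef k = (-2)^k * fact k * fps_nth Yf (k+1)"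
  unfolding ucoef_def cB_Yf m2pow
  by (simp add: power_mult_distrib field_simps del: of_nat_Suc)

lemma ucoef_0: "ucoef 0 = 0"
  using Y1 by (simp add: ucoef_Y)

lemma u_term:
  assumes "k \<le> m"
  shows "(-2)^m * fact m * (fps_nth Yf (k+1) * (1/2)^(m-k)/fact(m-k)) = real (m choose k) * ucoef k * (-1)^(m-k)"
proof -
  obtain j where m: "m = k + j" using assms le_Suc_ex by blast
  have c: "real (m choose k) = fact m / (fact k * fact j)" using binomial_fact[OF assms] m by simp
  have p: "(-2::real)^m = (-2)^k * (-1)^j * 2^j" unfolding m power_add m2pow[of j] by simp
  have h: "(2::real)^j * (1/2)^j = 1" by (simp add: power_one_over)
  have "(-2)^m * fact m * (fps_nth Yf (k+1) * (1/2)^(m-k)/fact(m-k))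
     = ((-2)^k * fact k * fps_nth Yf (k+1)) * (-1)^j * (fact m / (fact k * fact j)) * ((2::real)^j * (1/2)^j)"
    unfolding p using m by (simp add: divide_simps)
  also have "\<dots> = real (m choose k) * ucoef k * (-1)^(m-k)"
    unfolding h c ucoef_Y using m by simp
  finally show ?thesis .
qed

lemma u_id: "ucoef m + (\<Sum>k\<le>m. real (m choose k) * ucoef k * (-1)^(m-k)) = (-1)^m - (-2)^m"
proof -
  have "(-2)^m * fact m * (fps_nth Yf (m+1) + (\<Sum>k\<le>m. fps_nth Yf (k+1) * (1/2)^(m-k)/fact(m-k)))
      = (-2)^m * fact m * (((1/2)^m - 1)/fact m)" using Y_rec by simp
  moreover have "(-2::real)^m * fact m * (((1/2)^m - 1)/fact m) = (-1)^m - (-2)^m"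
  proof -
    have "(-2::real)^m * (1/2)^m = (-1)^m" by (simp flip: power_mult_distrib)
    moreover have "(-2::real)^m * fact m * (((1/2)^m - 1)/fact m) = (-2)^m * ((1/2)^m - 1)" by simp
    ultimately show ?thesis by (simp only: right_diff_distrib)
  qed
  moreover have "(-2)^m * fact m * (fps_nth Yf (m+1) + (\<Sum>k\<le>m. fps_nth Yf (k+1) * (1/2)^(m-k)/fact(m-k)))
      = ucoef m + (\<Sum>k\<le>m. real (m choose k) * ucoef k * (-1)^(m-k))"
  proof -
    have "(\<Sum>k\<le>m. (-2)^m * fact m * (fps_nth Yf (k+1) * (1/2)^(m-k)/fact(m-k)))
        = (\<Sum>k\<le>m. real (m choose k) * ucoef k * (-1)^(m-k))"
      by (rule sum.cong[OF refl]) (rule u_term, simp)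
    moreover have "(-2)^m * fact m * fps_nth Yf (m+1) = ucoef m" by (simp add: ucoef_Y)
    ultimately show ?thesis by (simp only: distrib_left sum_distrib_left)
  qed
  ultimately show ?thesis by metis
qed



definition Dfps :: "real fps" where "Dfps = Abs_fps dcoef"
definition Ufps :: "real fps" where "Ufps = Abs_fps ucoef"

lemma dcoef_Suc: "real (Suc j) * dcoef (Suc j) = (\<Sum>k\<in>{1..Suc j}. ucoef k * dcoef (Suc j - k))"
proof -
  have "dcoef (Suc j) = 1 / real (Suc j) * (\<Sum>k\<in>{1..Suc j}. ucoef k * dcoef (Suc j - k))"
    by (subst dcoef.simps) (simp only: ucoef_def)
  thus ?thesis by simp
qed

lemma D_ode: "fps_X * fps_deriv Dfps = Ufps * Dfps"
proof (rule fps_ext)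
  fix n
  show "fps_nth (fps_X * fps_deriv Dfps) n = fps_nth (Ufps * Dfps) n"
  proof (cases n)
    case 0 thus ?thesis by (simp add: Ufps_def fps_X_mult_nth fps_mult_nth ucoef_0)
  next
    case (Suc j)
    have "fps_nth (Ufps * Dfps) n = (\<Sum>i=0..Suc j. ucoef i * dcoef (Suc j - i))"
      by (simp add: Suc Ufps_def Dfps_def fps_mult_nth)
    also have "\<dots> = (\<Sum>i\<in>{1..Suc j}. ucoef i * dcoef (Suc j - i))"
      by (simp add: sum.atLeast_Suc_atMost ucoef_0)
    also have "\<dots> = real (Suc j) * dcoef (Suc j)" by (rule dcoef_Suc[symmetric])
    finally show ?thesis by (simp add: Suc fps_X_mult_nth Dfps_def)
  qed
qed

definition Winv :: "real fps" where "Winv = inverse (1 + fps_X)"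
definition Wf :: "real fps" where "Wf = fps_X * Winv"

lemma Winv_nth: "fps_nth Winv i = (-1)^i"
  unfolding Winv_def by (simp add: fps_inverse_fps_X_plus1')

lemma Winv_mult: "(1 + fps_X) * Winv = 1"
  unfolding Winv_def by (rule inverse_mult_eq_1') simp

lemma Wf_0: "fps_nth Wf 0 = 0" by (simp add: Wf_def fps_X_mult_nth)

lemma Winv_pow_nth: "fps_nth (Winv^(k+1)) i = (-1)^i * real ((k+i) choose k)"
proof (induction k arbitrary: i)
  case 0 thus ?case by (simp add: Winv_nth)
next
  case (Suc k)
  have "Winv^(Suc k+1) = Winv^(k+1) * Winv" by simp
  hence "fps_nth (Winv^(Suc k+1)) i = (\<Sum>j=0..i. fps_nth (Winv^(k+1)) j * fps_nth Winv (i-j))"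
    by (simp only: fps_mult_nth)
  also have "\<dots> = (\<Sum>j=0..i. (-1)^i * real ((k+j) choose j))"
  proof (rule sum.cong[OF refl])
    fix j assume "j \<in> {0..i}"
    hence pw: "(-1::real)^j * (-1)^(i-j) = (-1)^i" by (simp flip: power_add)
    have bs: "((k+j) choose k) = ((k+j) choose j)" using binomial_symmetric[of k "k+j"] by simp
    show "fps_nth (Winv^(k+1)) j * fps_nth Winv (i-j) = (-1)^i * real ((k+j) choose j)"
      unfolding Suc.IH Winv_nth bs pw[symmetric] by (simp only: mult_ac)
  qed
  also have "\<dots> = (-1)^i * real (Suc (k+i) choose i)"
    by (simp add: sum_distrib_left[symmetric] atLeast0AtMost sum_choose_lower flip: of_nat_sum)
  also have "\<dots> = (-1)^i * real ((Suc k + i) choose Suc k)"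
    by (metis add_Suc binomial_symmetric le_add2 add_diff_cancel_right' add.commute)
  finally show ?case .
qed



lemma Wpow_inv_nth: "fps_nth (Wf^k * Winv) m = (if k \<le> m then (-1)^(m-k) * real (m choose k) else 0)"
proof -
  have "Wf^k * Winv = fps_X^k * Winv^(k+1)" unfolding Wf_def by (simp add: power_mult_distrib mult_ac)
  hence "fps_nth (Wf^k * Winv) m = (if m < k then 0 else fps_nth (Winv^(k+1)) (m-k))"
    by (simp only: fps_X_power_mult_nth)
  thus ?thesis by (simp only: Winv_pow_nth) auto
qed

lemma compose_mult_nth:
  assumes b0: "fps_nth b 0 = (0::real)"
  shows "fps_nth ((a oo b) * c) m = (\<Sum>k\<le>m. fps_nth a k * fps_nth (b^k * c) m)"
proof -
  have z: "fps_nth (b^k) j = 0" if "j < k" for j k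
    using startsby_zero_power_prefix[OF b0, of k] that by blast
  have "fps_nth ((a oo b) * c) m = (\<Sum>j=0..m. (\<Sum>k=0..j. fps_nth a k * fps_nth (b^k) j) * fps_nth c (m-j))"
    by (simp add: fps_mult_nth fps_compose_nth)
  also have "\<dots> = (\<Sum>j=0..m. (\<Sum>k=0..m. fps_nth a k * fps_nth (b^k) j) * fps_nth c (m-j))"
  proof (rule sum.cong[OF refl])
    fix j assume j: "j \<in> {0..m}"
    have "(\<Sum>k=0..j. fps_nth a k * fps_nth (b^k) j) = (\<Sum>k=0..m. fps_nth a k * fps_nth (b^k) j)"
      by (rule sum.mono_neutral_left) (use j z in auto)
    thus "(\<Sum>k=0..j. fps_nth a k * fps_nth (b^k) j) * fps_nth c (m-j) =
          (\<Sum>k=0..m. fps_nth a k * fps_nth (b^k) j) * fps_nth c (m-j)" by simp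
  qed
  also have "\<dots> = (\<Sum>k=0..m. fps_nth a k * (\<Sum>j=0..m. fps_nth (b^k) j * fps_nth c (m-j)))"
    by (simp only: sum_distrib_right sum_distrib_left mult.assoc) (rule sum.swap)
  also have "\<dots> = (\<Sum>k\<le>m. fps_nth a k * fps_nth (b^k * c) m)"
    by (simp add: fps_mult_nth atMost_atLeast0)
  finally show ?thesis .
qed

lemma T_nth: "fps_nth ((Ufps oo Wf) * Winv) m = (\<Sum>k\<le>m. real (m choose k) * ucoef k * (-1)^(m-k))"
  unfolding compose_mult_nth[OF Wf_0]
  by (rule sum.cong[OF refl]) (auto simp: Ufps_def Wpow_inv_nth)

definition Vf :: "real fps" where "Vf = Ufps + (Ufps oo Wf) * Winv + fps_X * Winv"

lemma V_nth: "fps_nth Vf m = (if m = 0 then 0 else - ((-2)^m))"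
proof (cases m)
  case 0
  have "fps_nth Vf m = ucoef 0 + (\<Sum>k\<le>0. real (0 choose k) * ucoef k * (-1)^(0-k)) + fps_nth (fps_X * Winv) 0"
    unfolding Vf_def fps_add_nth T_nth 0 by (simp only: Ufps_def fps_nth_Abs_fps)
  thus ?thesis using 0 by (simp add: ucoef_0)
next
  case (Suc p)
  have x: "fps_nth (fps_X * Winv) m = (-1)^p" by (simp add: Suc Winv_nth)
  have "fps_nth Vf m = (ucoef m + (\<Sum>k\<le>m. real (m choose k) * ucoef k * (-1)^(m-k))) + (-1)^p"
    unfolding Vf_def fps_add_nth T_nth x by (simp only: Ufps_def fps_nth_Abs_fps)
  also have "\<dots> = - ((-2)^m)" unfolding u_id Suc by simp
  finally show ?thesis using Suc by simp
qed



lemma Winv_deriv: "fps_deriv Winv = - (Winv * Winv)"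
  unfolding Winv_def by (subst fps_inverse_deriv) (simp_all add: power2_eq_square)

lemma Winv_mult': "Winv * (1 + fps_X) = 1" using Winv_mult by (simp add: mult.commute)

lemma Wf_deriv: "fps_deriv Wf = (Winv * Winv)"
proof -
  have a: "fps_deriv Wf = Winv + fps_X * (- (Winv * Winv))"
    unfolding Wf_def by (simp add: Winv_deriv)
  have e: "((1 + fps_X) * Winv) * Winv = Winv" unfolding Winv_mult by simp
  have "Winv + fps_X * (- (Winv * Winv)) = ((1 + fps_X) * Winv) * Winv + fps_X * (- (Winv * Winv))"
    unfolding e ..
  also have "\<dots> = Winv * Winv" by (simp add: algebra_simps)
  finally show ?thesis using a by simp
qed

definition Sf :: "real fps" where "Sf = Dfps oo Wf"

lemma XS: "fps_X * fps_deriv Sf * (1 + fps_X) = (Ufps oo Wf) * Sf"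
proof -
  have "fps_X * fps_deriv Sf * (1 + fps_X) = (fps_X * Winv) * (fps_deriv Dfps oo Wf) * (Winv * (1 + fps_X))"
    unfolding Sf_def fps_compose_deriv[OF Wf_0] Wf_deriv by (simp add: algebra_simps power2_eq_square)
  also have "\<dots> = (fps_X oo Wf) * (fps_deriv Dfps oo Wf)"
    unfolding Winv_mult' fps_X_fps_compose_startby0[OF Wf_0] Wf_def by simp
  also have "\<dots> = (fps_X * fps_deriv Dfps) oo Wf" by (simp add: fps_compose_mult_distrib[OF Wf_0])
  also have "\<dots> = (Ufps oo Wf) * Sf" unfolding D_ode Sf_def by (simp add: fps_compose_mult_distrib[OF Wf_0])
  finally show ?thesis .
qed

lemma V1: "(1 + fps_X) * Vf = (1 + fps_X) * Ufps + (Ufps oo Wf) + fps_X"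
proof -
  have "(1 + fps_X) * Vf = (1 + fps_X) * Ufps + (Ufps oo Wf) * ((1 + fps_X) * Winv) + fps_X * ((1 + fps_X) * Winv)"
    unfolding Vf_def by (simp add: algebra_simps)
  thus ?thesis unfolding Winv_mult by simp
qed

definition Qf :: "real fps" where "Qf = Dfps * Sf * (1 + fps_X)"

lemma Q_ode: "fps_X * fps_deriv Qf = Qf * Vf"
proof -
  have "fps_X * fps_deriv Qf = (fps_X * fps_deriv Dfps) * Sf * (1 + fps_X) + Dfps * (fps_X * fps_deriv Sf * (1 + fps_X)) + fps_X * Dfps * Sf"
    unfolding Qf_def by (simp add: algebra_simps)
  also have "\<dots> = Dfps * Sf * ((1 + fps_X) * Ufps + (Ufps oo Wf) + fps_X)"
    unfolding XS D_ode by (simp add: algebra_simps)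
  also have "\<dots> = Qf * Vf" unfolding Qf_def V1[symmetric] by (simp add: algebra_simps)
  finally show ?thesis .
qed

definition Pf :: "real fps" where "Pf = 1 + fps_const 2 * fps_X"

lemma P_ode: "fps_X * fps_deriv Pf = Pf * Vf"
proof (rule fps_ext)
  fix m
  have d: "fps_deriv Pf = fps_const 2" unfolding Pf_def by simp
  have l: "fps_nth (fps_X * fps_deriv Pf) m = (if m = 1 then 2 else 0)"
    unfolding d fps_X_mult_nth by (cases m) auto
  have e: "Pf * Vf = Vf + fps_const 2 * (fps_X * Vf)" unfolding Pf_def by (simp add: algebra_simps)
  have r: "fps_nth (Pf * Vf) m = fps_nth Vf m + 2 * (if m = 0 then 0 else fps_nth Vf (m - 1))"
    unfolding e fps_add_nth fps_mult_left_const_nth fps_X_mult_nth by simp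
  show "fps_nth (fps_X * fps_deriv Pf) m = fps_nth (Pf * Vf) m"
    unfolding l r V_nth
  proof (cases m)
    case (Suc p)
    show "(if m = 1 then (2::real) else 0) = (if m = 0 then 0 else - ((- 2) ^ m)) +
        2 * (if m = 0 then 0 else (if m - 1 = 0 then 0 else - ((- 2) ^ (m - 1))))"
    proof (cases p)
      case (Suc q)
      have "(-2::real) ^ m = (-2) * (-2) ^ (m - 1)" using Suc \<open>m = Suc p\<close> by simp
      thus ?thesis using Suc \<open>m = Suc p\<close> by simp
    qed (use Suc in simp)
  qed simp
qed

lemma ode_unique:
  fixes A B V :: "real fps"
  assumes "fps_X * fps_deriv A = A * V" "fps_X * fps_deriv B = B * V"
    "fps_nth V 0 = 0" "fps_nth A 0 = fps_nth B 0"
  shows "A = B"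
proof -
  define C where "C = A - B"
  have C: "fps_X * fps_deriv C = C * V" unfolding C_def using assms(1,2) by (simp add: algebra_simps)
  have "fps_nth C n = 0" for n
  proof (induction n rule: less_induct)
    case (less n)
    show ?case
    proof (cases n)
      case 0 thus ?thesis using assms(4) by (simp add: C_def)
    next
      case (Suc p)
      have "real n * fps_nth C n = fps_nth (fps_X * fps_deriv C) n" by (simp add: Suc fps_X_mult_nth)
      also have "\<dots> = (\<Sum>i=0..n. fps_nth C i * fps_nth V (n-i))" unfolding C by (simp add: fps_mult_nth)
      also have "\<dots> = 0"
      proof (rule sum.neutral, safe)
        fix i assume "i \<in> {0..n}"
        thus "fps_nth C i * fps_nth V (n-i) = 0"
          using less[of i] assms(3) by (cases "i = n") auto
      qed
      finally show ?thesis using Suc by simp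
    qed
  qed
  thus ?thesis unfolding C_def by (simp add: fps_eq_iff)
qed

lemma main_identity: "Dfps * Sf * (1 + fps_X) = 1 + fps_const 2 * fps_X"
proof -
  have q0: "fps_nth Qf 0 = 1" unfolding Qf_def Sf_def by (simp add: Dfps_def)
  have p0: "fps_nth Pf 0 = 1" unfolding Pf_def by simp
  have "Qf = Pf" by (rule ode_unique[OF Q_ode P_ode]) (simp_all only: q0 p0 V_nth, simp)
  thus ?thesis unfolding Qf_def Pf_def .
qed



definition agree :: "nat \<Rightarrow> real fps \<Rightarrow> real fps \<Rightarrow> bool" where
  "agree M A B \<longleftrightarrow> (\<forall>i\<le>M. fps_nth A i = fps_nth B i)"

lemma agree_trans: "agree M A B \<Longrightarrow> agree M B C \<Longrightarrow> agree M A C"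
  unfolding agree_def by auto

lemma agree_mult: assumes "agree M A A'" shows "agree M (A * B) (A' * B)"
  unfolding agree_def
proof (intro allI impI)
  fix i assume i: "i \<le> M"
  show "fps_nth (A * B) i = fps_nth (A' * B) i"
    unfolding fps_mult_nth
    by (rule sum.cong[OF refl]) (use assms i in \<open>auto simp: agree_def\<close>)
qed

lemma agree_mult': "agree M B B' \<Longrightarrow> agree M (A * B) (A * B')"
  using agree_mult[of M B B' A] by (simp add: mult.commute)

definition DMf :: "nat \<Rightarrow> real fps" where "DMf M = (\<Sum>j\<le>M. fps_const (dcoef j) * fps_X ^ j)"
definition SMf :: "nat \<Rightarrow> real fps" where
  "SMf M = (\<Sum>j\<le>M. fps_const (dcoef j) * (fps_X ^ j * (1 + fps_X) ^ (M + 1 - j)))"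
definition SW :: "nat \<Rightarrow> real fps" where "SW M = (\<Sum>j\<le>M. fps_const (dcoef j) * Wf ^ j)"

lemma Xpow_nth: "fps_nth (fps_X ^ j :: real fps) i = (if i = j then 1 else 0)"
  by (simp add: fps_X_power_iff)

lemma agree_D: "agree M (DMf M) Dfps"
  unfolding agree_def DMf_def
proof (intro allI impI)
  fix i assume i: "i \<le> M"
  have "fps_nth (\<Sum>j\<le>M. fps_const (dcoef j) * fps_X ^ j) i = (\<Sum>j\<le>M. dcoef j * (if i = j then 1 else 0))"
    by (simp add: fps_sum_nth Xpow_nth)
  also have "\<dots> = (\<Sum>j\<le>M. if i = j then dcoef j else 0)" by (rule sum.cong) auto
  also have "\<dots> = dcoef i" using i by (simp add: sum.delta)
  finally show "fps_nth (\<Sum>j\<le>M. fps_const (dcoef j) * fps_X ^ j) i = fps_nth Dfps i" by (simp add: Dfps_def)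
qed

lemma agree_SW: "agree M Sf (SW M)"
  unfolding agree_def
proof (intro allI impI)
  fix i assume i: "i \<le> M"
  have z: "fps_nth (Wf^k) j = 0" if "j < k" for j k
    using startsby_zero_power_prefix[OF Wf_0, of k] that by blast
  have "fps_nth Sf i = (\<Sum>j=0..i. dcoef j * fps_nth (Wf^j) i)"
    by (simp add: Sf_def fps_compose_nth Dfps_def)
  also have "\<dots> = (\<Sum>j=0..M. dcoef j * fps_nth (Wf^j) i)"
    by (rule sum.mono_neutral_left) (use i z in auto)
  also have "\<dots> = fps_nth (SW M) i" by (simp add: SW_def fps_sum_nth atMost_atLeast0)
  finally show "fps_nth Sf i = fps_nth (SW M) i" .
qed

lemma SW_mult: "SW M * (1 + fps_X) ^ (M + 1) = SMf M"
proof -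
  have "Wf ^ j * (1 + fps_X) ^ (M + 1) = fps_X ^ j * (1 + fps_X) ^ (M + 1 - j)" if "j \<le> M" for j
  proof -
    have "(1 + fps_X :: real fps) ^ (M + 1) = (1 + fps_X) ^ j * (1 + fps_X) ^ (M + 1 - j)"
      using that by (simp flip: power_add)
    hence "Wf ^ j * (1 + fps_X) ^ (M + 1) = fps_X ^ j * (Winv * (1 + fps_X)) ^ j * (1 + fps_X) ^ (M + 1 - j)"
      unfolding Wf_def by (simp add: power_mult_distrib mult_ac)
    thus ?thesis unfolding Winv_mult' by simp
  qed
  thus ?thesis unfolding SW_def SMf_def sum_distrib_right
    by (intro sum.cong refl) (simp add: mult.assoc)
qed

lemma agree_main: "agree M (DMf M * SMf M) ((1 + fps_const 2 * fps_X) * (1 + fps_X) ^ M)"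
proof -
  have a1: "agree M (DMf M * SMf M) (Dfps * SMf M)" by (rule agree_mult[OF agree_D])
  have a2: "agree M (Sf * (1 + fps_X) ^ (M + 1)) (SMf M)"
    unfolding SW_mult[symmetric] by (rule agree_mult[OF agree_SW])
  have a3: "agree M (Dfps * SMf M) (Dfps * (Sf * (1 + fps_X) ^ (M + 1)))"
    using agree_mult'[OF a2, of Dfps] unfolding agree_def by auto
  have "Dfps * (Sf * (1 + fps_X) ^ (M + 1)) = (Dfps * Sf * (1 + fps_X)) * (1 + fps_X) ^ M"
    by (simp add: mult_ac)
  also have "\<dots> = (1 + fps_const 2 * fps_X) * (1 + fps_X) ^ M" unfolding main_identity ..
  finally have e: "Dfps * (Sf * (1 + fps_X) ^ (M + 1)) = (1 + fps_const 2 * fps_X) * (1 + fps_X) ^ M" .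
  show ?thesis using agree_trans[OF a1 a3] unfolding e .
qed

definition pD :: "nat \<Rightarrow> real poly" where "pD M = (\<Sum>j\<le>M. monom (dcoef j) j)"
definition pS :: "nat \<Rightarrow> real poly" where
  "pS M = (\<Sum>j\<le>M. smult (dcoef j) (monom 1 j * [:1,1:] ^ (M + 1 - j)))"
definition pR :: "nat \<Rightarrow> real poly" where
  "pR M = [:1,2:] * [:1,1:] ^ M - pD M * pS M"

lemma fps_pR: "fps_of_poly (pR M) = (1 + fps_const 2 * fps_X) * (1 + fps_X) ^ M - DMf M * SMf M"
  unfolding pR_def pD_def pS_def DMf_def SMf_def
  by (simp add: fps_of_poly_diff fps_of_poly_mult fps_of_poly_sum fps_of_poly_power fps_of_poly_monom
      fps_of_poly_smult fps_of_poly_linear' fps_of_poly_monom' mult_ac)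

lemma coeff_pR: "i \<le> M \<Longrightarrow> coeff (pR M) i = 0"
  using agree_main[of M] unfolding agree_def
  by (simp flip: fps_of_poly_nth add: fps_pR)



definition DM :: "nat \<Rightarrow> real \<Rightarrow> real" where "DM M x = (\<Sum>j\<le>M. dcoef j / x ^ j)"

lemma poly_bound:
  fixes p :: "real poly"
  assumes z: "\<And>i. i \<le> M \<Longrightarrow> coeff p i = 0" and t: "0 \<le> t" "t \<le> 1"
  shows "\<bar>poly p t\<bar> \<le> (\<Sum>i\<le>degree p. \<bar>coeff p i\<bar>) * t ^ (M + 1)"
proof -
  have "\<bar>poly p t\<bar> \<le> (\<Sum>i\<le>degree p. \<bar>coeff p i * t ^ i\<bar>)"
    unfolding poly_altdef by (rule sum_abs)
  also have "\<dots> \<le> (\<Sum>i\<le>degree p. \<bar>coeff p i\<bar> * t ^ (M + 1))"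
  proof (rule sum_mono)
    fix i
    show "\<bar>coeff p i * t ^ i\<bar> \<le> \<bar>coeff p i\<bar> * t ^ (M + 1)"
    proof (cases "i \<le> M")
      case True thus ?thesis using z by simp
    next
      case False
      hence "t ^ i \<le> t ^ (M + 1)" using t by (intro power_decreasing) auto
      thus ?thesis using t by (simp add: abs_mult mult_left_mono)
    qed
  qed
  also have "\<dots> = (\<Sum>i\<le>degree p. \<bar>coeff p i\<bar>) * t ^ (M + 1)" by (simp add: sum_distrib_right)
  finally show ?thesis .
qed

definition Kc :: "nat \<Rightarrow> real" where "Kc M = (\<Sum>i\<le>degree (pR M). \<bar>coeff (pR M) i\<bar>)"

lemma Kc_nonneg: "Kc M \<ge> 0" unfolding Kc_def by (simp add: sum_nonneg)

lemma rho_eq: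
  assumes x: "x > 0"
  shows "(x+2)/(x+1) - DM M x * DM M (x+1) = poly (pR M) (1/x) / (1 + 1/x) ^ (M+1)"
proof -
  define t where "t = 1/x"
  have t: "t > 0" using x by (simp add: t_def)
  have tp: "1 + t > 0" using t by simp
  have D1: "DM M x = poly (pD M) t"
    by (simp add: DM_def pD_def poly_sum poly_monom t_def power_one_over)
  have D2: "DM M (x+1) = poly (pS M) t / (1+t)^(M+1)"
  proof -
    have "poly (pS M) t / (1+t)^(M+1) = (\<Sum>j\<le>M. dcoef j * (t^j * (1+t)^(M+1-j)) / (1+t)^(M+1))"
      by (simp add: pS_def poly_sum poly_monom sum_divide_distrib)
    also have "\<dots> = (\<Sum>j\<le>M. dcoef j / (x+1)^j)"
    proof (rule sum.cong[OF refl])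
      fix j assume "j \<in> {..M}"
      hence "(1+t)^(M+1) = (1+t)^j * (1+t)^(M+1-j)" by (simp flip: power_add)
      hence "dcoef j * (t^j * (1+t)^(M+1-j)) / (1+t)^(M+1) = dcoef j * (t / (1+t))^j"
        using tp by (simp add: power_divide)
      also have "t / (1+t) = 1/(x+1)" using x by (simp add: t_def field_simps)
      finally show "dcoef j * (t^j * (1+t)^(M+1-j)) / (1+t)^(M+1) = dcoef j / (x+1)^j"
        by (simp add: power_one_over)
    qed
    finally show ?thesis by (simp add: DM_def)
  qed
  have Q1: "(1 + 2*t) * (1+t)^M / (1+t)^(M+1) = (1+2*t)/(1+t)"
  proof -
    have c: "(1+t)^M \<noteq> 0" using tp by simp
    have e: "(1+t)^(M+1) = (1+t)*(1+t)^M" by simp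
    show ?thesis unfolding e by (rule nonzero_mult_divide_mult_cancel_right[OF c])
  qed
  have n1: "1 + 2*t = (x+2)/x" and n2: "1+t = (x+1)/x" using x by (simp_all add: t_def field_simps)
  have Q2: "(1+2*t)/(1+t) = (x+2)/(x+1)" unfolding n1 n2 using x by simp
  have Q: "(x+2)/(x+1) = (1 + 2*t) * (1+t)^M / (1+t)^(M+1)" using Q1 Q2 by simp
  have "poly (pR M) t / (1+t)^(M+1) = (1 + 2*t) * (1+t)^M / (1+t)^(M+1) - poly (pD M) t * (poly (pS M) t / (1+t)^(M+1))"
  proof -
    have "poly (pR M) t = (1 + 2*t) * (1+t)^M - poly (pD M) t * poly (pS M) t"
      by (simp add: pR_def algebra_simps)
    thus ?thesis by (simp only: diff_divide_distrib times_divide_eq_right)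
  qed
  thus ?thesis unfolding Q D1 D2 t_def by simp
qed

lemma rho_bound:
  assumes x: "x \<ge> 1"
  shows "\<bar>(x+2)/(x+1) - DM M x * DM M (x+1)\<bar> \<le> Kc M / x ^ (M+1)"
proof -
  have b: "\<bar>poly (pR M) (1/x)\<bar> \<le> Kc M * (1/x)^(M+1)"
    unfolding Kc_def by (rule poly_bound) (use x coeff_pR in auto)
  have "(1::real) \<le> (1 + 1/x)^(M+1)" using x by (intro one_le_power) auto
  hence "\<bar>poly (pR M) (1/x)\<bar> / (1 + 1/x) ^ (M+1) \<le> \<bar>poly (pR M) (1/x)\<bar> / 1"
    by (intro divide_left_mono) auto
  moreover have pos: "(1 + 1/x) ^ (M+1) > 0"
    by (intro zero_less_power) (use x in \<open>simp add: add_pos_nonneg\<close>)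
  ultimately have "\<bar>poly (pR M) (1/x) / (1 + 1/x) ^ (M+1)\<bar> \<le> \<bar>poly (pR M) (1/x)\<bar>"
    by (simp only: abs_divide abs_of_pos[OF pos] div_by_1)
  thus ?thesis unfolding rho_eq[OF order.strict_trans2[OF zero_less_one x]] using b
    by (simp add: power_one_over)
qed



definition fr :: "real \<Rightarrow> real" where
  "fr y = unit_ball_vol y ^ 2 / (unit_ball_vol (y - 1) * unit_ball_vol (y + 1))"

lemma fr_Gamma:
  assumes y: "y \<ge> 0"
  shows "fr y = Gamma ((y+1)/2) * Gamma ((y+3)/2) / Gamma (y/2+1) ^ 2"
proof -
  have g1: "Gamma ((y+1)/2) > 0" "Gamma ((y+3)/2) > 0" "Gamma (y/2+1) > 0"
    using y by (auto intro!: Gamma_real_pos)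
  have a1a: "(y-1)/2+1 = (y+1)/2" by (simp add: field_simps)
  have a1b: "(y+1)/2+1 = (y+3)/2" by (simp add: field_simps)
  note a1 = a1a a1b
  have s: "(y-1)/2 + (y+1)/2 = y/2 + y/2" by (simp add: field_simps)
  have p: "(pi powr (y/2))^2 = pi powr ((y-1)/2) * pi powr ((y+1)/2)"
    unfolding power2_eq_square powr_add[symmetric] s ..
  have pp: "pi powr ((y-1)/2) > 0" "pi powr ((y+1)/2) > 0" by simp_all
  show ?thesis unfolding fr_def unit_ball_vol_def a1 power_divide p
    using g1 pp by (simp add: field_simps power2_eq_square)
qed

lemma fr_rec:
  assumes y: "y \<ge> 0"
  shows "fr y * fr (y+1) = (y+2)/(y+1)"
proof -
  define a where "a = y/2 + 1/2"
  have a: "a > 0" using y by (simp add: a_def)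
  have G: "Gamma a > 0" "Gamma (a + 1/2) > 0" using a by (auto intro!: Gamma_real_pos)
  have e1a: "(y+1)/2 = a" unfolding a_def by (simp add: field_simps)
  have e1b: "(y+3)/2 = a + 1" unfolding a_def by (simp add: field_simps)
  have e1c: "y/2+1 = a + 1/2" unfolding a_def by (simp add: field_simps)
  have e2a: "(y+1+1)/2 = a + 1/2" unfolding a_def by (simp add: field_simps)
  have e2b: "(y+1+3)/2 = (a+1/2) + 1" unfolding a_def by (simp add: field_simps)
  have e2c: "(y+1)/2+1 = a + 1" unfolding a_def by (simp add: field_simps)
  note e1 = e1a e1b e1c and e2 = e2a e2b e2c
  have "fr y * fr (y+1) = (Gamma a * Gamma (a+1) / Gamma (a+1/2) ^ 2) *
      (Gamma (a+1/2) * Gamma ((a+1/2)+1) / Gamma (a+1) ^ 2)"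
  proof -
    have y1: "y + 1 \<ge> 0" using y by simp
    show ?thesis unfolding fr_Gamma[OF y] fr_Gamma[OF y1] e1 e2 by simp
  qed
  also have "\<dots> = (a + 1/2) / a"
  proof -
    have np: "x \<notin> \<int>\<^sub>\<le>\<^sub>0" if "x > 0" for x :: real
      using that by (auto elim!: nonpos_Ints_cases)
    have g1: "Gamma (a+1) = a * Gamma a" by (rule Gamma_plus1[OF np]) (use a in simp)
    have g2: "Gamma ((a+1/2)+1) = (a+1/2) * Gamma (a+1/2)" by (rule Gamma_plus1[OF np]) (use a in simp)
    have alg: "(A * (c*A) / B^2) * (B * (b*B) / (c*A)^2) = b / c" if "c > 0" "A > 0" "B > 0" for A B b c :: real
      using that by (simp add: field_simps power2_eq_square)
    show ?thesis unfolding g1 g2 by (rule alg) (use a G in auto)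
  qed
  also have "\<dots> = (y+2)/(y+1)" unfolding a_def using y by (simp add: field_simps)
  finally show ?thesis .
qed

lemma fr_ge1:
  assumes y: "y \<ge> 0"
  shows "fr y \<ge> 1"
proof -
  define p q m where "p = (y+1)/2" and "q = (y+3)/2" and "m = y/2+1"
  have pos: "p > 0" "q > 0" "m > 0" using y by (simp_all add: p_def q_def m_def)
  have G: "Gamma p > 0" "Gamma q > 0" "Gamma m > 0" using pos by (auto intro!: Gamma_real_pos)
  have mid: "m = (1 - 1/2) *\<^sub>R p + (1/2) *\<^sub>R q" by (simp add: p_def q_def m_def field_simps)
  have "(ln \<circ> Gamma) m \<le> (1 - 1/2) * (ln \<circ> Gamma) p + (1/2) * (ln \<circ> Gamma) q"
    unfolding mid by (rule convex_onD[OF log_convex_Gamma_real]) (use pos in auto)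
  hence "ln (Gamma m ^ 2) \<le> ln (Gamma p * Gamma q)"
    using G by (simp add: ln_mult ln_realpow)
  hence "Gamma m ^ 2 \<le> Gamma p * Gamma q" using G by simp
  thus ?thesis unfolding fr_Gamma[OF y] p_def[symmetric] q_def[symmetric] m_def[symmetric]
    using G by simp
qed



declare dcoef.simps(2)[simp del]

definition fv :: "nat \<Rightarrow> real" where "fv n = fr (real n)"

lemma fv_rec: "fv n * fv (Suc n) = (real n + 2) / (real n + 1)"
  unfolding fv_def using fr_rec[of "real n"] by (simp add: add.commute)

lemma fv_ge1: "fv n \<ge> 1" unfolding fv_def by (rule fr_ge1) simp

lemma fv_le: "fv n \<le> (real n + 2) / (real n + 1)"
proof -
  have ne: "fv (Suc n) \<noteq> 0" using fv_ge1[of "Suc n"] by linarith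
  have "fv n = (fv n * fv (Suc n)) / fv (Suc n)" using ne by simp
  hence "fv n = ((real n + 2) / (real n + 1)) / fv (Suc n)" unfolding fv_rec .
  also have "\<dots> \<le> (real n + 2) / (real n + 1)"
    using divide_left_mono[of 1 "fv (Suc n)" "(real n + 2)/(real n + 1)"] fv_ge1[of "Suc n"] by simp
  finally show ?thesis .
qed

lemma q_le2: "(real n + 2) / (real n + 1) \<le> 2" by (simp add: field_simps)
lemma q_ge1: "(real n + 2) / (real n + 1) \<ge> 1" by (simp add: field_simps)

lemma fv_le2: "fv n \<le> 2" using fv_le[of n] q_le2[of n] by linarith

lemma fv_minus1: "fv n - 1 \<le> 1 / (real n + 1)"
proof -
  have "(real n + 2) / (real n + 1) = 1 + 1 / (real n + 1)" by (simp add: field_simps)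
  thus ?thesis using fv_le[of n] by linarith
qed

definition Aabs :: "nat \<Rightarrow> real" where "Aabs M = (\<Sum>j\<le>M. \<bar>dcoef j\<bar>)"

lemma Aabs_nonneg: "Aabs M \<ge> 0" unfolding Aabs_def by (simp add: sum_nonneg)

lemma DM_bound: assumes x: "x \<ge> 1" shows "\<bar>DM M x\<bar> \<le> Aabs M"
proof -
  have "\<bar>DM M x\<bar> \<le> (\<Sum>j\<le>M. \<bar>dcoef j / x^j\<bar>)" unfolding DM_def by (rule sum_abs)
  also have "\<dots> \<le> Aabs M" unfolding Aabs_def
  proof (rule sum_mono)
    fix j
    have "x^j \<ge> 1" using x by (rule one_le_power)
    thus "\<bar>dcoef j / x^j\<bar> \<le> \<bar>dcoef j\<bar>" by (simp add: abs_divide divide_le_eq mult_le_cancel_left1)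
  qed
  finally show ?thesis .
qed

lemma DM_minus1: assumes x: "x \<ge> 1" shows "\<bar>DM M x - 1\<bar> \<le> Aabs M / x"
proof -
  have s: "(\<Sum>j\<le>M. (if j = 0 then 1 else 0)) = (1::real)" by (simp add: sum.delta)
  have "DM M x - 1 = (\<Sum>j\<le>M. dcoef j / x^j - (if j = 0 then 1 else 0))"
    unfolding DM_def sum_subtractf s ..
  also have "\<bar>\<dots>\<bar> \<le> (\<Sum>j\<le>M. \<bar>dcoef j / x^j - (if j = 0 then 1 else 0)\<bar>)" by (rule sum_abs)
  also have "\<dots> \<le> (\<Sum>j\<le>M. \<bar>dcoef j\<bar> / x)"
  proof (rule sum_mono)
    fix j
    show "\<bar>dcoef j / x^j - (if j = 0 then 1 else 0)\<bar> \<le> \<bar>dcoef j\<bar> / x"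
    proof (cases j)
      case 0 thus ?thesis using x by simp
    next
      case (Suc i)
      have "x^j \<ge> x" using x Suc by (metis One_nat_def le_add1 Suc_le_eq zero_less_Suc power_increasing power_one_right order_trans)
      hence "\<bar>dcoef j\<bar> / x^j \<le> \<bar>dcoef j\<bar> / x" using x by (intro divide_left_mono) auto
      moreover have p: "x^j > 0" using x by simp
      moreover have "\<bar>dcoef j / x^j - (if j = 0 then 1 else 0)\<bar> = \<bar>dcoef j\<bar> / x^j"
        using Suc p by (simp add: abs_divide del: power_Suc)
      ultimately show ?thesis by simp
    qed
  qed
  also have "\<dots> = Aabs M / x" unfolding Aabs_def by (simp add: sum_divide_distrib)
  finally show ?thesis .
qed



lemma sq_step:
  fixes y :: real assumes y: "y \<ge> 2"
  shows "1 / y^2 \<le> 1/y - 1/(y+2)"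
proof -
  have a: "1/y \<le> 2/(y+2)" using y by (simp add: field_simps)
  have "1/y^2 = (1/y) * (1/y)" by (simp add: power2_eq_square)
  also have "\<dots> \<le> (1/y) * (2/(y+2))" using a y by (intro mult_left_mono) auto
  also have "\<dots> = 1/y - 1/(y+2)" using y by (simp add: field_simps)
  finally show ?thesis .
qed

lemma sum_sq_bound:
  fixes x :: real assumes x: "x \<ge> 2"
  shows "(\<Sum>i<k. 1 / (x + 2 * real i)^2) \<le> 1/x - 1/(x + 2 * real k)"
proof (induction k)
  case 0 thus ?case by simp
next
  case (Suc k)
  have "(\<Sum>i<Suc k. 1 / (x + 2 * real i)^2) = (\<Sum>i<k. 1 / (x + 2 * real i)^2) + 1 / (x + 2 * real k)^2"
    by simp
  also have "\<dots> \<le> (1/x - 1/(x + 2 * real k)) + (1/(x + 2 * real k) - 1/(x + 2 * real k + 2))"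
    using Suc.IH sq_step[of "x + 2 * real k"] x by simp
  also have "\<dots> = 1/x - 1/(x + 2 * real (Suc k))" by (simp add: algebra_simps)
  finally show ?case .
qed

lemma sum_pow_bound:
  fixes x :: real assumes x: "x \<ge> 2" and M: "M \<ge> 1"
  shows "(\<Sum>i<k. 1 / (x + 2 * real i)^(M+1)) \<le> 1 / x^M"
proof -
  have "(\<Sum>i<k. 1 / (x + 2 * real i)^(M+1)) \<le> (\<Sum>i<k. (1/x^(M-1)) * (1 / (x + 2 * real i)^2))"
  proof (rule sum_mono)
    fix i
    have e: "(x + 2 * real i)^(M+1) = (x + 2 * real i)^(M-1) * (x + 2 * real i)^2"
      using M by (simp flip: power_add)
    have "x^(M-1) \<le> (x + 2 * real i)^(M-1)" using x by (intro power_mono) auto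
    hence "x^(M-1) * (x + 2 * real i)^2 \<le> (x + 2 * real i)^(M+1)"
      unfolding e by (intro mult_right_mono) auto
    moreover have "x^(M-1) * (x + 2 * real i)^2 > 0" using x by simp
    ultimately have "1 / (x + 2 * real i)^(M+1) \<le> 1 / (x^(M-1) * (x + 2 * real i)^2)"
      by (intro divide_left_mono) auto
    thus "1 / (x + 2 * real i)^(M+1) \<le> (1/x^(M-1)) * (1 / (x + 2 * real i)^2)" by simp
  qed
  also have "\<dots> = (1/x^(M-1)) * (\<Sum>i<k. 1 / (x + 2 * real i)^2)" by (simp add: sum_distrib_left)
  also have "\<dots> \<le> (1/x^(M-1)) * (1/x)"
  proof (intro mult_left_mono)
    have "1/(x + 2 * real k) \<ge> 0" using x by simp
    thus "(\<Sum>i<k. 1 / (x + 2 * real i)^2) \<le> 1/x" using sum_sq_bound[OF x, of k] by linarith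
  qed (use x in simp)
  also have "\<dots> = 1 / x^M" using M by (simp add: power_eq_if)
  finally show ?thesis .
qed

lemma le_of_all_k:
  fixes a b c :: real
  assumes h: "\<And>k::nat. a \<le> b + c / (real k + 1)"
  shows "a \<le> b"
proof (rule ccontr)
  assume "\<not> a \<le> b"
  hence d: "a - b > 0" by simp
  obtain k :: nat where k: "\<bar>c\<bar> / (a - b) < real k" using reals_Archimedean2 by blast
  have "\<bar>c\<bar> < (a - b) * real k" using k d by (simp add: field_simps)
  also have "\<dots> \<le> (a - b) * (real k + 1)" using d by simp
  finally have "c / (real k + 1) < a - b" by (simp add: field_simps)
  thus False using h[of k] by simp
qed



definition gq :: "nat \<Rightarrow> nat \<Rightarrow> real" where "gq M n = DM M (real n) / fv n"
definition rq :: "nat \<Rightarrow> nat \<Rightarrow> real" where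
  "rq M n = (real n + 2) / (real n + 1) - DM M (real n) * DM M (real n + 1)"
definition sq :: "nat \<Rightarrow> nat \<Rightarrow> real" where "sq M n = - rq M n / ((real n + 2) / (real n + 1))"

lemma rSuc: "real (Suc n) = real n + 1" by simp

lemma rq_bound: "n \<ge> 1 \<Longrightarrow> \<bar>rq M n\<bar> \<le> Kc M / real n ^ (M+1)"
  unfolding rq_def by (rule rho_bound) simp

lemma sq_bound: "\<bar>sq M n\<bar> \<le> \<bar>rq M n\<bar>"
proof -
  have q: "(real n + 2) / (real n + 1) \<ge> 1" by (rule q_ge1)
  have "\<bar>sq M n\<bar> = \<bar>rq M n\<bar> / ((real n + 2) / (real n + 1))"
  proof -
    have "\<bar>sq M n\<bar> = \<bar>rq M n\<bar> / \<bar>(real n + 2) / (real n + 1)\<bar>"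
      unfolding sq_def by (simp only: abs_divide abs_minus_cancel)
    thus ?thesis using q by simp
  qed
  also have "\<dots> \<le> \<bar>rq M n\<bar> / 1" using q by (intro divide_left_mono) auto
  finally show ?thesis by simp
qed

lemma gg: "gq M n * gq M (Suc n) = 1 + sq M n"
proof -
  have q: "(real n + 2) / (real n + 1) > 0" by simp
  have "gq M n * gq M (Suc n) = (DM M (real n) * DM M (real n + 1)) / (fv n * fv (Suc n))"
    unfolding gq_def rSuc by simp
  also have "\<dots> = ((real n + 2) / (real n + 1) - rq M n) / ((real n + 2) / (real n + 1))"
    unfolding fv_rec rq_def by simp
  also have "\<dots> = 1 + sq M n"
  proof -
    have alg: "(Q - r)/Q = 1 + - r / Q" if "Q > 0" for Q r :: real using that by (simp add: field_simps)
    show ?thesis unfolding sq_def by (rule alg[OF q])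
  qed
  finally show ?thesis .
qed

lemma g_diff: "gq M n - gq M (n+2) = gq M (n+2) * sq M n - gq M n * sq M (n+1)"
proof -
  have a: "gq M n * gq M (Suc n) = 1 + sq M n" by (rule gg)
  have b: "gq M (Suc n) * gq M (n+2) = 1 + sq M (n+1)" using gg[of M "Suc n"] by simp
  have "gq M (n+2) * (1 + sq M n) = gq M n * (1 + sq M (n+1))"
    unfolding a[symmetric] b[symmetric] by (simp add: mult_ac)
  thus ?thesis by (simp add: algebra_simps)
qed

lemma g_bound: "n \<ge> 1 \<Longrightarrow> \<bar>gq M n\<bar> \<le> Aabs M"
proof -
  assume n: "n \<ge> 1"
  have "\<bar>gq M n\<bar> = \<bar>DM M (real n)\<bar> / fv n" unfolding gq_def using fv_ge1[of n] by (simp add: abs_divide)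
  also have "\<dots> \<le> \<bar>DM M (real n)\<bar> / 1" using fv_ge1[of n] by (intro divide_left_mono) auto
  also have "\<dots> \<le> Aabs M" using DM_bound[of "real n" M] n by simp
  finally show ?thesis .
qed

lemma g_step:
  assumes n: "n \<ge> 1"
  shows "\<bar>gq M n - gq M (n+2)\<bar> \<le> 2 * Aabs M * Kc M / real n ^ (M+1)"
proof -
  have A: "Aabs M \<ge> 0" by (rule Aabs_nonneg)
  have K: "Kc M \<ge> 0" by (rule Kc_nonneg)
  have s1: "\<bar>sq M n\<bar> \<le> Kc M / real n ^ (M+1)" using sq_bound[of M n] rq_bound[OF n, of M] by linarith
  have "\<bar>sq M (n+1)\<bar> \<le> Kc M / real (n+1) ^ (M+1)" using sq_bound[of M "n+1"] rq_bound[of "n+1" M] by simp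
  also have "\<dots> \<le> Kc M / real n ^ (M+1)" using n K by (intro divide_left_mono power_mono mult_pos_pos) auto
  finally have s2: "\<bar>sq M (n+1)\<bar> \<le> Kc M / real n ^ (M+1)" .
  have "\<bar>gq M n - gq M (n+2)\<bar> \<le> \<bar>gq M (n+2)\<bar> * \<bar>sq M n\<bar> + \<bar>gq M n\<bar> * \<bar>sq M (n+1)\<bar>"
    unfolding g_diff by (simp add: abs_mult[symmetric] abs_triangle_ineq4)
  also have "\<dots> \<le> Aabs M * (Kc M / real n ^ (M+1)) + Aabs M * (Kc M / real n ^ (M+1))"
    by (intro add_mono mult_mono g_bound s1 s2) (use n A in auto)
  also have "\<dots> = 2 * Aabs M * Kc M / real n ^ (M+1)" by simp
  finally show ?thesis .
qed

lemma g_tele: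
  assumes n: "n \<ge> 1"
  shows "\<bar>gq M n - gq M (n + 2*k)\<bar> \<le> (\<Sum>i<k. 2 * Aabs M * Kc M / (real n + 2 * real i) ^ (M+1))"
proof (induction k)
  case 0 thus ?case by simp
next
  case (Suc k)
  have "\<bar>gq M n - gq M (n + 2*Suc k)\<bar> \<le> \<bar>gq M n - gq M (n + 2*k)\<bar> + \<bar>gq M (n + 2*k) - gq M (n + 2*k + 2)\<bar>"
    by (simp add: algebra_simps)
  also have "\<dots> \<le> (\<Sum>i<k. 2 * Aabs M * Kc M / (real n + 2 * real i) ^ (M+1)) + 2 * Aabs M * Kc M / (real n + 2 * real k) ^ (M+1)"
    using Suc.IH g_step[of "n + 2*k" M] n by simp
  also have "\<dots> = (\<Sum>i<Suc k. 2 * Aabs M * Kc M / (real n + 2 * real i) ^ (M+1))" by simp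
  finally show ?case .
qed

lemma g_minus1:
  assumes m: "m \<ge> 1"
  shows "\<bar>gq M m - 1\<bar> \<le> (Aabs M + 1) / real m"
proof -
  have f1: "fv m \<ge> 1" by (rule fv_ge1)
  have "gq M m - 1 = (DM M (real m) - fv m) / fv m" unfolding gq_def using f1 by (simp add: field_simps)
  hence "\<bar>gq M m - 1\<bar> = \<bar>DM M (real m) - fv m\<bar> / fv m" using f1 by (simp add: abs_divide)
  also have "\<dots> \<le> \<bar>DM M (real m) - fv m\<bar> / 1" using f1 by (intro divide_left_mono) auto
  also have "\<dots> \<le> \<bar>DM M (real m) - 1\<bar> + \<bar>fv m - 1\<bar>" by simp
  also have "\<dots> \<le> Aabs M / real m + 1 / real m"
  proof (intro add_mono)
    show "\<bar>DM M (real m) - 1\<bar> \<le> Aabs M / real m" using DM_minus1[of "real m" M] m by simp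
    have "\<bar>fv m - 1\<bar> \<le> 1 / (real m + 1)" using fv_minus1[of m] f1 by simp
    also have "\<dots> \<le> 1 / real m" using m by (intro divide_left_mono) auto
    finally show "\<bar>fv m - 1\<bar> \<le> 1 / real m" .
  qed
  also have "\<dots> = (Aabs M + 1) / real m" by (simp add: add_divide_distrib)
  finally show ?thesis .
qed

lemma main_est:
  assumes M: "M \<ge> 1" and n: "n \<ge> 2"
  shows "\<bar>fv n - DM M (real n)\<bar> \<le> 4 * Aabs M * Kc M / real n ^ M"
proof -
  have A: "Aabs M \<ge> 0" by (rule Aabs_nonneg)
  have K: "Kc M \<ge> 0" by (rule Kc_nonneg)
  have x: "real n \<ge> 2" using n by simp
  have g1: "\<bar>gq M n - 1\<bar> \<le> 2 * Aabs M * Kc M / real n ^ M"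
  proof (rule le_of_all_k)
    fix k :: nat
    have "\<bar>gq M n - gq M (n + 2*k)\<bar> \<le> (\<Sum>i<k. 2 * Aabs M * Kc M / (real n + 2 * real i) ^ (M+1))"
      by (rule g_tele) (use n in simp)
    also have "\<dots> = (2 * Aabs M * Kc M) * (\<Sum>i<k. 1 / (real n + 2 * real i) ^ (M+1))"
      by (simp add: sum_distrib_left)
    also have "\<dots> \<le> (2 * Aabs M * Kc M) * (1 / real n ^ M)"
      by (intro mult_left_mono sum_pow_bound x M) (use A K in simp)
    finally have t1: "\<bar>gq M n - gq M (n + 2*k)\<bar> \<le> 2 * Aabs M * Kc M / real n ^ M" by simp
    have "\<bar>gq M (n + 2*k) - 1\<bar> \<le> (Aabs M + 1) / real (n + 2*k)" by (rule g_minus1) (use n in simp)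
    also have "\<dots> \<le> (Aabs M + 1) / (real k + 1)" using A n by (intro divide_left_mono) auto
    finally have t2: "\<bar>gq M (n + 2*k) - 1\<bar> \<le> (Aabs M + 1) / (real k + 1)" .
    show "\<bar>gq M n - 1\<bar> \<le> 2 * Aabs M * Kc M / real n ^ M + (Aabs M + 1) / (real k + 1)"
      using t1 t2 by linarith
  qed
  have f1: "fv n \<ge> 1" by (rule fv_ge1)
  have "fv n - DM M (real n) = fv n * (1 - gq M n)" unfolding gq_def using f1 by (simp add: field_simps)
  hence "\<bar>fv n - DM M (real n)\<bar> = fv n * \<bar>gq M n - 1\<bar>" using f1 by (simp add: abs_mult abs_minus_commute)
  also have "\<dots> \<le> 2 * (2 * Aabs M * Kc M / real n ^ M)"
    by (intro mult_mono fv_le2 g1) (use A K in simp_all)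
  also have "\<dots> = 4 * Aabs M * Kc M / real n ^ M" by simp
  finally show ?thesis .
qed



theorem theorem15:
  fixes N :: nat
  shows "(\<lambda>n::nat. unit_ball_vol (real n) ^ 2 /
            (unit_ball_vol (real n - 1) * unit_ball_vol (real n + 1))
          - (\<Sum>j\<le>N. dcoef j / real n ^ j))
         \<in> O(\<lambda>n. 1 / real n ^ (N + 1))"
proof -
  define C where "C = 4 * Aabs (N+1) * Kc (N+1) + \<bar>dcoef (N+1)\<bar>"
  have ev: "eventually (\<lambda>n. norm (unit_ball_vol (real n) ^ 2 /
            (unit_ball_vol (real n - 1) * unit_ball_vol (real n + 1))
          - (\<Sum>j\<le>N. dcoef j / real n ^ j)) \<le> C * norm (1 / real n ^ (N + 1))) sequentially"
    unfolding eventually_sequentially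
  proof (intro exI allI impI)
    fix n :: nat assume n: "n \<ge> 2"
    have x: "real n > 0" using n by simp
    have e1: "unit_ball_vol (real n) ^ 2 / (unit_ball_vol (real n - 1) * unit_ball_vol (real n + 1))
          - (\<Sum>j\<le>N. dcoef j / real n ^ j) = fv n - DM N (real n)"
      by (simp add: fv_def fr_def DM_def)
    have e2: "DM (N+1) (real n) = DM N (real n) + dcoef (N+1) / real n ^ (N+1)"
      by (simp add: DM_def)
    have "\<bar>fv n - DM N (real n)\<bar> \<le> \<bar>fv n - DM (N+1) (real n)\<bar> + \<bar>dcoef (N+1) / real n ^ (N+1)\<bar>"
      unfolding e2 by linarith
    also have "\<dots> \<le> 4 * Aabs (N+1) * Kc (N+1) / real n ^ (N+1) + \<bar>dcoef (N+1)\<bar> / real n ^ (N+1)"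
      using main_est[of "N+1" n] n x by (simp add: abs_divide)
    also have "\<dots> = C * norm (1 / real n ^ (N + 1))"
      using x by (simp add: C_def add_divide_distrib)
    finally show "norm (unit_ball_vol (real n) ^ 2 /
            (unit_ball_vol (real n - 1) * unit_ball_vol (real n + 1))
          - (\<Sum>j\<le>N. dcoef j / real n ^ j)) \<le> C * norm (1 / real n ^ (N + 1))"
      unfolding e1 by simp
  qed
  show ?thesis by (rule bigoI[OF ev])
qed


end
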